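(* Let $(M,\mathbf g)$ be a $(d+1)$-dimensional spacetime with metric $$\mathbf g=g_{tt}(r)\,\mathbf dt^2+g_{rr}(r)\,\mathbf dr^2+r^2\{\mathbf d\theta^2+s(\theta)^2\mathbf d\Omega_{(d-2)}^2\},$$ where $g_{tt}<0$ and $g_{rr}>0$ are smooth, $\mathbf d\Omega_{(d-2)}^2$ is the metric of the unit $(d-2)$-sphere, and $s(\theta)=\sin\theta$, $\theta$, or $\sinh\theta$. Let $S=\{r=r_p\}$, a timelike hypersurface, let $p\in S$, and let $\boldsymbol\sigma_{\boldsymbol\chi}$ be the trace-free part of the second fundamental form of $S$. Then for any nonzero vectors $\mathbf X,\mathbf Y\in T_pS$: $\boldsymbol\sigma_{\boldsymbol\chi}(\mathbf X,\mathbf X)=0$ iff $\boldsymbol\sigma_{\boldsymbol\chi}(\mathbf Y,\mathbf Y)=0$; $\boldsymbol\sigma_{\boldsymbol\chi}(\mathbf X,\mathbf X)>0$ iff $\boldsymbol\sigma_{\boldsymbol\chi}(\mathbf Y,\mathbf Y)>0$; and $\boldsymbol\sigma_{\boldsymbol\chi}(\mathbf X,\mathbf X)<0$ iff $\boldsymbol\sigma_{\boldsymbol\chi}(\mathbf Y,\mathbf Y)<0$.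
   Context: For a hypersurface $S$ with unit normal $\bar{\mathbf m}$ and induced metric $\mathbf h$, the second fundamental form is $\boldsymbol\chi(X,Y)=\mathbf g(\nabla_X\bar{\mathbf m},Y)$ for $X,Y$ tangent to $S$; the mean curvature is $H=\frac1d\mathrm{tr}_{\mathbf h}\boldsymbol\chi$ and the trace-free part is $\boldsymbol\sigma_{\boldsymbol\chi}=\boldsymbol\chi-H\mathbf h$. *)

theory Defs
  imports "HOL-Analysis.Analysis"
begin

text \<open>Points and vectors are
  functions nat \<Rightarrow> real; only the components with index < n are meaningful.\<close>

definition pd :: "nat \<Rightarrow> ((nat \<Rightarrow> real) \<Rightarrow> real) \<Rightarrow> (nat \<Rightarrow> real) \<Rightarrow> real" where
  "pd i f x = deriv (\<lambda>h. f (x(i := x i + h))) 0"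

definition coord_vec :: "nat \<Rightarrow> nat \<Rightarrow> real" where
  "coord_vec a = (\<lambda>k. if k = a then 1 else 0)"

definition gform :: "nat \<Rightarrow> (nat \<Rightarrow> nat \<Rightarrow> real) \<Rightarrow> (nat \<Rightarrow> real) \<Rightarrow> (nat \<Rightarrow> real) \<Rightarrow> real" where
  "gform n G X Y = (\<Sum>i<n. \<Sum>j<n. G i j * X i * Y j)"

text \<open>Christoffel symbols of the first kind of the Levi-Civita connection:
  christoffel1 g x l i j = g(nabla_{d_i} d_j, d_l).\<close>
definition christoffel1 ::
  "((nat \<Rightarrow> real) \<Rightarrow> nat \<Rightarrow> nat \<Rightarrow> real) \<Rightarrow> (nat \<Rightarrow> real) \<Rightarrow> nat \<Rightarrow> nat \<Rightarrow> nat \<Rightarrow> real" where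
  "christoffel1 g x l i j =
     (pd i (\<lambda>y. g y j l) x + pd j (\<lambda>y. g y i l) x - pd l (\<lambda>y. g y i j) x) / 2"

text \<open>cov_form n g V x X Y = g(nabla_X V, Y) at the point x, for a vector field V.\<close>
definition cov_form ::
  "nat \<Rightarrow> ((nat \<Rightarrow> real) \<Rightarrow> nat \<Rightarrow> nat \<Rightarrow> real) \<Rightarrow> ((nat \<Rightarrow> real) \<Rightarrow> nat \<Rightarrow> real)
     \<Rightarrow> (nat \<Rightarrow> real) \<Rightarrow> (nat \<Rightarrow> real) \<Rightarrow> (nat \<Rightarrow> real) \<Rightarrow> real" where
  "cov_form n g V x X Y =
     (\<Sum>i<n. \<Sum>l<n. X i * Y l *
        ((\<Sum>k<n. g x k l * pd i (\<lambda>y. V y k) x) + (\<Sum>j<n. christoffel1 g x l i j * V x j)))"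

definition trace_wrt :: "nat set \<Rightarrow> (nat \<Rightarrow> nat \<Rightarrow> real) \<Rightarrow> (nat \<Rightarrow> nat \<Rightarrow> real) \<Rightarrow> real" where
  "trace_wrt I h c =
     (let hinv = (SOME q. \<forall>a\<in>I. \<forall>b\<in>I. (\<Sum>e\<in>I. q a e * h e b) = (if a = b then 1 else 0))
      in \<Sum>a\<in>I. \<Sum>b\<in>I. hinv a b * c a b)"

text \<open>Hypersurfaces S = {x. x 1 = const} (level sets of coordinate 1), with unit normal
  field m. Tangent space of S is spanned by the coordinate vectors d_a, a < n, a \<noteq> 1;
  S has dimension n - 1.\<close>
definition tangent_idx :: "nat \<Rightarrow> nat set" where
  "tangent_idx n = {a. a < n \<and> a \<noteq> 1}"

definition sff ::
  "nat \<Rightarrow> ((nat \<Rightarrow> real) \<Rightarrow> nat \<Rightarrow> nat \<Rightarrow> real) \<Rightarrow> ((nat \<Rightarrow> real) \<Rightarrow> nat \<Rightarrow> real)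
     \<Rightarrow> (nat \<Rightarrow> real) \<Rightarrow> (nat \<Rightarrow> real) \<Rightarrow> (nat \<Rightarrow> real) \<Rightarrow> real" where
  "sff n g m x X Y = cov_form n g m x X Y"

definition mean_curv ::
  "nat \<Rightarrow> ((nat \<Rightarrow> real) \<Rightarrow> nat \<Rightarrow> nat \<Rightarrow> real) \<Rightarrow> ((nat \<Rightarrow> real) \<Rightarrow> nat \<Rightarrow> real)
     \<Rightarrow> (nat \<Rightarrow> real) \<Rightarrow> real" where
  "mean_curv n g m x =
     trace_wrt (tangent_idx n) (\<lambda>a b. g x a b)
       (\<lambda>a b. sff n g m x (coord_vec a) (coord_vec b)) / real (n - 1)"

definition tf_sff ::
  "nat \<Rightarrow> ((nat \<Rightarrow> real) \<Rightarrow> nat \<Rightarrow> nat \<Rightarrow> real) \<Rightarrow> ((nat \<Rightarrow> real) \<Rightarrow> nat \<Rightarrow> real)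
     \<Rightarrow> (nat \<Rightarrow> real) \<Rightarrow> (nat \<Rightarrow> real) \<Rightarrow> (nat \<Rightarrow> real) \<Rightarrow> real" where
  "tf_sff n g m x X Y = sff n g m x X Y - mean_curv n g m x * gform n (g x) X Y"

text \<open>The metric g_tt(r) dt^2 + g_rr(r) dr^2 + r^2 (dtheta^2 + s(theta)^2 dOmega_(d-2)^2)
  on an (d+1)-dimensional patch, coordinates x0 = t, x1 = r, x2 = theta, and
  x3, ..., xd standard hyperspherical coordinates on the unit (d-2)-sphere, whose metric is
  dphi_1^2 + sin^2 phi_1 dphi_2^2 + ... + (prod_{j<d-2} sin^2 phi_j) dphi_(d-2)^2.\<close>
definition ss_metric ::
  "nat \<Rightarrow> (real \<Rightarrow> real) \<Rightarrow> (real \<Rightarrow> real) \<Rightarrow> (real \<Rightarrow> real) \<Rightarrow> (nat \<Rightarrow> real) \<Rightarrow> nat \<Rightarrow> nat \<Rightarrow> real" where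
  "ss_metric d gtt grr s x i j =
     (if i \<noteq> j \<or> i > d then 0
      else if i = 0 then gtt (x 1)
      else if i = 1 then grr (x 1)
      else if i = 2 then (x 1)\<^sup>2
      else (x 1)\<^sup>2 * (s (x 2))\<^sup>2 * (\<Prod>k\<in>{3..<i}. (sin (x k))\<^sup>2))"

end

theory Submission
  imports Defs
begin


lemma pd_zero: "(\<And>y. f y = 0) \<Longrightarrow> pd i f x = 0"
  unfolding pd_def by simp

lemma ssm_offdiag: "i \<noteq> j \<Longrightarrow> ss_metric d gtt grr s y i j = 0"
  by (simp add: ss_metric_def)

lemma gform_diag:
  assumes "\<And>i j. i \<noteq> j \<Longrightarrow> G i j = 0"
  shows "gform n G X Y = (\<Sum>i<n. G i i * X i * Y i)"
proof -
  have "(\<Sum>j<n. G i j * X i * Y j) = G i i * X i * Y i" if "i < n" for i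
  proof -
    have "(\<Sum>j<n. G i j * X i * Y j) = (\<Sum>j<n. if j = i then G i i * X i * Y i else 0)"
      by (rule sum.cong) (auto simp: assms)
    also have "\<dots> = G i i * X i * Y i" using that by simp
    finally show ?thesis .
  qed
  then show ?thesis unfolding gform_def by (auto intro: sum.cong)
qed

lemma gform_coord:
  assumes "\<And>i j. i \<noteq> j \<Longrightarrow> G i j = 0" "a < n"
  shows "gform n G V (coord_vec a) = G a a * V a"
proof -
  have "gform n G V (coord_vec a) = (\<Sum>i<n. G i i * V i * coord_vec a i)"
    by (rule gform_diag) (rule assms(1))
  also have "\<dots> = (\<Sum>i<n. if i = a then G a a * V a else 0)"
    by (rule sum.cong) (auto simp: coord_vec_def)
  also have "\<dots> = G a a * V a" using assms(2) by simp
  finally show ?thesis .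
qed

lemma sff_formula:
  assumes diag: "\<And>y i j. i \<noteq> j \<Longrightarrow> g y i j = 0"
    and mt: "\<And>j. j < n \<Longrightarrow> j \<noteq> 1 \<Longrightarrow> m p j = 0"
    and pdm: "\<And>i l. i < n \<Longrightarrow> i \<noteq> 1 \<Longrightarrow> l < n \<Longrightarrow> l \<noteq> 1 \<Longrightarrow> pd i (\<lambda>y. m y l) p = 0"
    and n1: "1 < n" and X1: "X 1 = 0" and Y1: "Y 1 = 0"
  shows "sff n g m p X Y = (\<Sum>i<n. X i * Y i * (m p 1 * pd 1 (\<lambda>y. g y i i) p / 2))"
proof -
  let ?A = "\<lambda>i. X i * Y i * (m p 1 * pd 1 (\<lambda>y. g y i i) p / 2)"
  have key: "X i * Y l * ((\<Sum>k<n. g p k l * pd i (\<lambda>y. m y k) p)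
        + (\<Sum>j<n. christoffel1 g p l i j * m p j)) = (if l = i then ?A i else 0)"
    if i: "i < n" and l: "l < n" for i l
  proof (cases "i = 1 \<or> l = 1")
    case True then show ?thesis using X1 Y1 by auto
  next
    case False
    have s1: "(\<Sum>k<n. g p k l * pd i (\<lambda>y. m y k) p) = 0"
    proof (rule sum.neutral, rule ballI)
      fix k assume k: "k \<in> {..<n}"
      show "g p k l * pd i (\<lambda>y. m y k) p = 0"
      proof (cases "k = l")
        case True
        then have "pd i (\<lambda>y. m y k) p = 0" using pdm[of i k] i k False by simp
        then show ?thesis by simp
      next
        case False
        then show ?thesis by (simp add: diag)
      qed
    qed
    have s2: "(\<Sum>j<n. christoffel1 g p l i j * m p j) = (\<Sum>j<n. if j = 1 then christoffel1 g p l i 1 * m p 1 else 0)"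
    proof (rule sum.cong[OF refl])
      fix j assume "j \<in> {..<n}"
      then show "christoffel1 g p l i j * m p j = (if j = 1 then christoffel1 g p l i 1 * m p 1 else 0)"
        using mt[of j] by (cases "j = 1") simp_all
    qed
    have z1: "pd i (\<lambda>y. g y 1 l) p = 0"
      by (rule pd_zero) (rule diag, use False in simp)
    have z2: "pd l (\<lambda>y. g y i 1) p = 0"
      by (rule pd_zero) (rule diag, use False in simp)
    have c1: "christoffel1 g p l i 1 = pd 1 (\<lambda>y. g y i l) p / 2"
      unfolding christoffel1_def z1 z2 by simp
    have s2': "(\<Sum>j<n. christoffel1 g p l i j * m p j) = christoffel1 g p l i 1 * m p 1"
      unfolding s2 using n1 by simp
    show ?thesis
    proof (cases "l = i")
      case True
      then show ?thesis unfolding s1 s2' c1 by simp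
    next
      case ne: False
      have "pd 1 (\<lambda>y. g y i l) p = 0" by (rule pd_zero) (rule diag, use ne in simp)
      then show ?thesis unfolding s1 s2' c1 using ne by simp
    qed
  qed
  have "sff n g m p X Y = (\<Sum>i<n. \<Sum>l<n. if l = i then ?A i else 0)"
    unfolding sff_def cov_form_def by (intro sum.cong refl) (simp only: key lessThan_iff)
  also have "\<dots> = (\<Sum>i<n. ?A i)" by simp
  finally show ?thesis .
qed

lemma pd1_g0:
  assumes "gtt differentiable (at rp)" "p 1 = rp"
  shows "pd 1 (\<lambda>y. ss_metric d gtt grr s y 0 0) p = deriv gtt rp"
proof -
  have "DERIV gtt (0 + rp) :> deriv gtt rp"
    using assms(1) DERIV_deriv_iff_real_differentiable by simp
  then have "DERIV (\<lambda>h. gtt (h + rp)) 0 :> deriv gtt rp"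
    by (simp only: DERIV_shift)
  moreover have "(\<lambda>h. ss_metric d gtt grr s (p(1 := p 1 + h)) 0 0) = (\<lambda>h. gtt (h + rp))"
    using assms(2) by (auto simp: ss_metric_def add.commute)
  ultimately show ?thesis unfolding pd_def by (simp add: DERIV_imp_deriv)
qed

lemma pd1_gi:
  assumes "p 1 = rp" "2 \<le> i" "i \<le> d"
  shows "pd 1 (\<lambda>y. ss_metric d gtt grr s y i i) p * rp = 2 * ss_metric d gtt grr s p i i"
proof -
  define K where "K = (if i = 2 then 1 else (s (p 2))\<^sup>2 * (\<Prod>k\<in>{3..<i}. (sin (p k))\<^sup>2))"
  have eq: "ss_metric d gtt grr s (p(1 := p 1 + h)) i i = (rp + h)^2 * K" for h
  proof -
    have "(\<Prod>k\<in>{3..<i}. (sin ((p(1 := p 1 + h)) k))\<^sup>2) = (\<Prod>k\<in>{3..<i}. (sin (p k))\<^sup>2)"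
      by (rule prod.cong) auto
    then show ?thesis using assms by (auto simp: ss_metric_def K_def)
  qed
  have G: "ss_metric d gtt grr s p i i = rp^2 * K"
    using eq[of 0] by simp
  have "DERIV (\<lambda>h. (rp + h)^2 * K) 0 :> 2 * rp * K"
    by (auto intro!: derivative_eq_intros)
  then have "pd 1 (\<lambda>y. ss_metric d gtt grr s y i i) p = 2 * rp * K"
    unfolding pd_def eq by (rule DERIV_imp_deriv)
  then show ?thesis using G by (simp add: power2_eq_square)
qed

lemma Gpos:
  assumes "rp > 0" "s (p 2) \<noteq> 0" "\<forall>k. 3 \<le> k \<and> k < d \<longrightarrow> sin (p k) \<noteq> 0" "p 1 = rp"
    "2 \<le> i" "i \<le> d"
  shows "ss_metric d gtt grr s p i i > 0"
proof -
  have "(\<Prod>k\<in>{3..<i}. (sin (p k))\<^sup>2) > 0"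
    by (rule prod_pos) (use assms in auto)
  then show ?thesis using assms by (auto simp: ss_metric_def)
qed

lemma s_cont:
  assumes "s = sin \<or> s = (\<lambda>\<theta>. \<theta>) \<or> s = sinh"
  shows "continuous (at 0) (\<lambda>h::real. s (a + h * b))"
  using assms by (auto intro!: continuous_intros)

lemma pdm:
  assumes s: "s = sin \<or> s = (\<lambda>\<theta>. \<theta>) \<or> s = sinh"
    and p1: "p 1 = rp"
    and Gnz: "ss_metric d gtt grr s p l l \<noteq> 0"
    and m_normal: "\<forall>y. y 1 = rp \<longrightarrow>
            (\<forall>a\<in>tangent_idx (Suc d).
                  gform (Suc d) (ss_metric d gtt grr s y) (m y) (coord_vec a) = 0)"
    and i: "i \<noteq> 1" and l: "l < Suc d" "l \<noteq> 1"
  shows "pd i (\<lambda>y. m y l) p = 0"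
proof -
  define f where "f h = ss_metric d gtt grr s (p(i := p i + h)) l l" for h
  have upd: "(p(i := p i + h)) = (\<lambda>k. p k + h * coord_vec i k)" for h
    by (auto simp: coord_vec_def)
  have c: "continuous (at 0) f"
  proof (cases "l = 0 \<or> l = 2")
    case True
    then have "f = (\<lambda>h. if l = 0 then gtt rp else rp^2)"
      using l i p1 by (auto simp: f_def ss_metric_def fun_eq_iff)
    then show ?thesis by simp
  next
    case False
    have fexp: "f = (\<lambda>h. rp^2 * (s (p 2 + h * coord_vec i 2))^2 * (\<Prod>k\<in>{3..<l}. (sin (p k + h * coord_vec i k))^2))"
      using l i p1 False by (auto simp: f_def upd ss_metric_def coord_vec_def fun_eq_iff)
    have c1: "continuous (at 0) (\<lambda>h::real. s (p 2 + h * coord_vec i 2))" by (rule s_cont[OF s])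
    have c2: "continuous (at 0) (\<lambda>h::real. (\<Prod>k\<in>{3..<l}. (sin (p k + h * coord_vec i k))^2))"
      by (intro continuous_prod ballI continuous_power continuous_sin continuous_add continuous_mult continuous_const continuous_ident)
    show ?thesis unfolding fexp
      by (intro continuous_mult continuous_power continuous_const c1 c2)
  qed
  have "f 0 \<noteq> 0" using Gnz by (simp add: f_def)
  then have "\<forall>\<^sub>F h in at 0. f h \<noteq> 0"
    using c by (auto simp: continuous_at intro: tendsto_imp_eventually_ne)
  then have ev: "\<forall>\<^sub>F h in nhds 0. f h \<noteq> 0"
    using \<open>f 0 \<noteq> 0\<close> by (auto simp: eventually_at_filter elim: eventually_mono)
  have "\<forall>\<^sub>F h in nhds 0. m (p(i := p i + h)) l = 0"
  proof (rule eventually_mono[OF ev])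
    fix h assume fh: "f h \<noteq> 0"
    have "gform (Suc d) (ss_metric d gtt grr s (p(i := p i + h))) (m (p(i := p i + h))) (coord_vec l) = 0"
      using m_normal i l p1 by (auto simp: tangent_idx_def)
    then have "f h * m (p(i := p i + h)) l = 0"
      using gform_coord[of "ss_metric d gtt grr s (p(i := p i + h))" l "Suc d"] l
      by (simp add: ssm_offdiag f_def)
    then show "m (p(i := p i + h)) l = 0" using fh by simp
  qed
  then have "DERIV (\<lambda>h. m (p(i := p i + h)) l) 0 :> 0"
    using DERIV_cong_ev[of 0 0 "\<lambda>h. m (p(i := p i + h)) l" "\<lambda>_. 0" 0 0] by simp
  then show ?thesis unfolding pd_def by (rule DERIV_imp_deriv)
qed



theorem lemma1:
  fixes d :: nat and gtt grr s :: "real \<Rightarrow> real" and R :: "real set" and rp :: real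
    and p :: "nat \<Rightarrow> real" and m :: "(nat \<Rightarrow> real) \<Rightarrow> nat \<Rightarrow> real"
    and X Y :: "nat \<Rightarrow> real"
  assumes d: "2 \<le> d"
    and R: "open R" "R \<subseteq> {0<..}" "rp \<in> R"
    and sign: "\<forall>r\<in>R. gtt r < 0 \<and> grr r > 0"
    and smooth: "\<forall>k. \<forall>r\<in>R. ((deriv ^^ k) gtt) differentiable (at r)
                          \<and> ((deriv ^^ k) grr) differentiable (at r)"
    and s: "s = sin \<or> s = (\<lambda>\<theta>. \<theta>) \<or> s = sinh"
    and p_S: "p 1 = rp"
    and p_chart: "s (p 2) \<noteq> 0" "\<forall>k. 3 \<le> k \<and> k < d \<longrightarrow> sin (p k) \<noteq> 0"
    and m_normal: "\<forall>y. y 1 = rp \<longrightarrow>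
              (\<forall>k>d. m y k = 0)
            \<and> gform (Suc d) (ss_metric d gtt grr s y) (m y) (m y) = 1
            \<and> (\<forall>a\<in>tangent_idx (Suc d).
                  gform (Suc d) (ss_metric d gtt grr s y) (m y) (coord_vec a) = 0)"
    and m_orient: "(\<forall>y. y 1 = rp \<longrightarrow> m y 1 > 0) \<or> (\<forall>y. y 1 = rp \<longrightarrow> m y 1 < 0)"
    and X: "X 1 = 0" "\<forall>k>d. X k = 0" "X \<noteq> (\<lambda>_. 0)"
    and Y: "Y 1 = 0" "\<forall>k>d. Y k = 0" "Y \<noteq> (\<lambda>_. 0)"
  shows "(tf_sff (Suc d) (ss_metric d gtt grr s) m p X X = 0
            \<longleftrightarrow> tf_sff (Suc d) (ss_metric d gtt grr s) m p Y Y = 0)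
       \<and> (tf_sff (Suc d) (ss_metric d gtt grr s) m p X X > 0
            \<longleftrightarrow> tf_sff (Suc d) (ss_metric d gtt grr s) m p Y Y > 0)
       \<and> (tf_sff (Suc d) (ss_metric d gtt grr s) m p X X < 0
            \<longleftrightarrow> tf_sff (Suc d) (ss_metric d gtt grr s) m p Y Y < 0)"
proof -
  define g where "g = ss_metric d gtt grr s"
  define n where "n = Suc d"
  define G where "G i = g p i i" for i
  define D where "D i = pd 1 (\<lambda>y. g y i i) p" for i
  define m1 where "m1 = m p 1"
  have rp: "rp > 0" using R by auto
  have diag: "\<And>y i j. i \<noteq> j \<Longrightarrow> g y i j = 0" by (simp add: g_def ssm_offdiag)
  have G0: "G 0 < 0" using sign R p_S by (simp add: G_def g_def ss_metric_def)
  have Gp: "G i > 0" if "2 \<le> i" "i \<le> d" for i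
    unfolding G_def g_def by (rule Gpos[where s=s and p=p and d=d and rp=rp and i=i]) (use rp p_chart p_S that in auto)
  have I: "tangent_idx n = insert 0 {2..d}" by (auto simp: tangent_idx_def n_def)
  have Gnz: "G i \<noteq> 0" if "i < n" "i \<noteq> 1" for i
    using G0 Gp[of i] that by (cases "i = 0") (auto simp: n_def)
  have mt: "m p j = 0" if "j < n" "j \<noteq> 1" for j
  proof -
    have "gform n (g p) (m p) (coord_vec j) = 0"
      using m_normal p_S that by (auto simp: tangent_idx_def g_def n_def)
    then have "G j * m p j = 0" using gform_coord[of "g p" j n "m p"] diag that
      by (simp add: G_def)
    then show ?thesis using Gnz[OF that] by simp
  qed
  have pdm0: "pd i (\<lambda>y. m y l) p = 0" if "i < n" "i \<noteq> 1" "l < n" "l \<noteq> 1" for i l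
    unfolding g_def
  proof (rule pdm[where s=s and p=p and rp=rp and d=d and gtt=gtt and grr=grr and m=m and i=i and l=l])
    show "ss_metric d gtt grr s p l l \<noteq> 0" using Gnz[OF that(3,4)] by (simp add: G_def g_def)
  qed (use s p_S m_normal that in \<open>auto simp: n_def\<close>)
  have n1: "1 < n" using d by (simp add: n_def)
  have sffgen: "sff n g m p V W = (\<Sum>i<n. V i * W i * (m1 * D i / 2))"
    if "V 1 = 0" "W 1 = 0" for V W
    unfolding m1_def D_def
    by (rule sff_formula[where g=g and m=m and p=p and n=n and X=V and Y=W]) (use diag mt pdm0 n1 that in auto)
  have sffc: "sff n g m p (coord_vec a) (coord_vec b) = (if a = b then m1 * D a / 2 else 0)"
    if "a < n" "a \<noteq> 1" "b < n" "b \<noteq> 1" for a b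
  proof -
    have "sff n g m p (coord_vec a) (coord_vec b)
        = (\<Sum>i<n. coord_vec a i * coord_vec b i * (m1 * D i / 2))"
      by (rule sffgen) (use that in \<open>auto simp: coord_vec_def\<close>)
    also have "\<dots> = (\<Sum>i<n. if i = a then (if a = b then m1 * D a / 2 else 0) else 0)"
      by (rule sum.cong) (auto simp: coord_vec_def)
    also have "\<dots> = (if a = b then m1 * D a / 2 else 0)" using that by simp
    finally show ?thesis .
  qed
  define I where "I = tangent_idx n"
  define P where "P q = (\<forall>a\<in>I. \<forall>b\<in>I. (\<Sum>e\<in>I. q a e * g p e b) = (if a = b then 1 else (0::real)))" for q
  define q0 where "q0 a b = (if a = b then 1 / G a else 0)" for a b
  have fI: "finite I" by (simp add: I_def tangent_idx_def)
  have Isub: "a < n \<and> a \<noteq> 1" if "a \<in> I" for a using that by (auto simp: I_def tangent_idx_def)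
  have "P q0"
    unfolding P_def
  proof (intro ballI)
    fix a b assume ab: "a \<in> I" "b \<in> I"
    have "(\<Sum>e\<in>I. q0 a e * g p e b) = (\<Sum>e\<in>I. if e = a then q0 a a * g p a b else 0)"
      by (rule sum.cong) (auto simp: q0_def)
    also have "\<dots> = q0 a a * g p a b" using ab fI by simp
    also have "\<dots> = (if a = b then 1 else 0)"
      using Gnz Isub[OF ab(1)] diag by (auto simp: q0_def G_def)
    finally show "(\<Sum>e\<in>I. q0 a e * g p e b) = (if a = b then 1 else 0)" .
  qed
  then have PS: "P (SOME q. P q)" by (rule someI[where P=P])
  define q where "q = (SOME q. P q)"
  have qaa: "q a a = 1 / G a" if "a \<in> I" for a
  proof -
    have "(\<Sum>e\<in>I. q a e * g p e a) = 1" using PS that by (auto simp: P_def q_def)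
    moreover have "(\<Sum>e\<in>I. q a e * g p e a) = (\<Sum>e\<in>I. if e = a then q a a * G a else 0)"
      by (rule sum.cong) (auto simp: diag G_def)
    ultimately have "q a a * G a = 1" using that fI by simp
    then show ?thesis using Gnz Isub[OF that] by (simp add: field_simps)
  qed
  have trace: "trace_wrt I (\<lambda>a b. g p a b) (\<lambda>a b. sff n g m p (coord_vec a) (coord_vec b))
      = (\<Sum>a\<in>I. m1 * D a / (2 * G a))"
  proof -
    have "trace_wrt I (\<lambda>a b. g p a b) (\<lambda>a b. sff n g m p (coord_vec a) (coord_vec b))
        = (\<Sum>a\<in>I. \<Sum>b\<in>I. q a b * sff n g m p (coord_vec a) (coord_vec b))"
      unfolding trace_wrt_def Let_def q_def P_def by simp
    also have "\<dots> = (\<Sum>a\<in>I. \<Sum>b\<in>I. if b = a then q a a * (m1 * D a / 2) else 0)"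
      by (intro sum.cong refl) (use Isub in \<open>auto simp: sffc\<close>)
    also have "\<dots> = (\<Sum>a\<in>I. m1 * D a / (2 * G a))"
      by (intro sum.cong refl) (simp add: qaa fI)
    finally show ?thesis .
  qed
  have D0: "D 0 = deriv gtt rp"
  proof -
    have "gtt differentiable (at rp)" using smooth R(3) by (metis funpow_0)
    then show ?thesis unfolding D_def g_def by (intro pd1_g0 p_S)
  qed
  have Di: "D i = 2 * G i / rp" if "2 \<le> i" "i \<le> d" for i
    using pd1_gi[where p=p and rp=rp and i=i and d=d and gtt=gtt and grr=grr and s=s] p_S that rp by (simp add: D_def G_def g_def field_simps)
  define a where "a = D 0 / (2 * G 0)"
  have sumI: "(\<Sum>a\<in>I. m1 * D a / (2 * G a)) = m1 * a + (real d - 1) * (m1 / rp)"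
  proof -
    have "(\<Sum>a\<in>I. m1 * D a / (2 * G a)) = m1 * D 0 / (2 * G 0) + (\<Sum>i\<in>{2..d}. m1 * D i / (2 * G i))"
      unfolding I_def I by simp
    also have "(\<Sum>i\<in>{2..d}. m1 * D i / (2 * G i)) = (\<Sum>i\<in>{2..d}. m1 / rp)"
    proof (rule sum.cong[OF refl])
      fix i assume "i \<in> {2..d}"
      then have "D i = 2 * G i / rp" "G i > 0" using Di Gp by auto
      then show "m1 * D i / (2 * G i) = m1 / rp" using rp by (simp add: field_simps)
    qed
    also have "\<dots> = (real d - 1) * (m1 / rp)" using d by (simp add: of_nat_diff)
    finally show ?thesis by (simp add: a_def)
  qed
  define H where "H = (m1 * a + (real d - 1) * (m1 / rp)) / real d"
  have Hdef: "mean_curv n g m p = H"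
    unfolding mean_curv_def H_def using trace sumI by (simp add: I_def n_def)
  define C where "C = m1 / real d * (1 / rp - a)"
  define qq where "qq i = (if i = 0 then - (real d - 1) * G 0 else if i = 1 then 0 else G i)" for i
  have tfform: "tf_sff n g m p V V = C * (\<Sum>i<n. (V i)\<^sup>2 * qq i)"
    if V: "V 1 = 0" "\<forall>k>d. V k = 0" for V
  proof -
    have gf: "gform n (g p) V V = (\<Sum>i<n. G i * V i * V i)"
      unfolding G_def by (rule gform_diag) (rule diag)
    have "tf_sff n g m p V V = (\<Sum>i<n. V i * V i * (m1 * D i / 2)) - H * (\<Sum>i<n. G i * V i * V i)"
      unfolding tf_sff_def Hdef gf sffgen[of V V, OF V(1) V(1)] ..
    also have "\<dots> = (\<Sum>i<n. V i * V i * (m1 * D i / 2) - H * (G i * V i * V i))"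
      by (simp add: sum_subtractf sum_distrib_left)
    also have "\<dots> = (\<Sum>i<n. C * ((V i)\<^sup>2 * qq i))"
    proof (rule sum.cong[OF refl])
      fix i assume i: "i \<in> {..<n}"
      have dpos: "real d > 0" using d by simp
      show "V i * V i * (m1 * D i / 2) - H * (G i * V i * V i) = C * ((V i)\<^sup>2 * qq i)"
      proof (cases "i = 0")
        case True
        then show ?thesis using G0 dpos rp
          by (simp add: qq_def C_def H_def a_def field_simps power2_eq_square)
      next
        case False
        show ?thesis
        proof (cases "i = 1")
          case True then show ?thesis using V by (simp add: qq_def)
        next
          case False2: False
          have "2 \<le> i" "i \<le> d" using False False2 i by (auto simp: n_def)
          then show ?thesis using Di[of i] Gp[of i] rp dpos False False2
            by (simp add: qq_def C_def H_def a_def field_simps power2_eq_square)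
        qed
      qed
    qed
    also have "\<dots> = C * (\<Sum>i<n. (V i)\<^sup>2 * qq i)" by (simp add: sum_distrib_left)
    finally show ?thesis .
  qed
  have Qpos: "(\<Sum>i<n. (V i)\<^sup>2 * qq i) > 0"
    if V: "V 1 = 0" "\<forall>k>d. V k = 0" "V \<noteq> (\<lambda>_. 0)" for V
  proof -
    obtain j where j: "V j \<noteq> 0" using V(3) by auto
    have "j \<le> d"
    proof (rule ccontr)
      assume "\<not> j \<le> d"
      then have "j > d" by simp
      then have "V j = 0" using V(2) by blast
      then show False using j by simp
    qed
    then have jn: "j < n" "j \<noteq> 1" using j V(1) by (auto simp: n_def)
    have qqpos: "qq i > 0" if "i < n" "i \<noteq> 1" for i
    proof (cases "i = 0")
      case True
      have "real d - 1 > 0" using d by simp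
      then have "(real d - 1) * G 0 < 0" using G0 by (rule mult_pos_neg)
      then show ?thesis using True by (simp add: qq_def algebra_simps)
    next
      case False
      then show ?thesis using that Gp[of i] by (auto simp: qq_def n_def)
    qed
    show ?thesis
    proof (rule sum_pos2[of "{..<n}" j])
      show "0 < (V j)\<^sup>2 * qq j" using j qqpos[OF jn] by simp
      show "0 \<le> (V i)\<^sup>2 * qq i" if "i \<in> {..<n}" for i
      proof -
        from that show "0 \<le> (V i)\<^sup>2 * qq i"
        proof (cases "i = 1")
          case True then show ?thesis by (simp add: qq_def)
        next
          case False
          then have "qq i > 0" using qqpos \<open>i \<in> {..<n}\<close> by simp
          then show ?thesis by simp
        qed
      qed
    qed (use jn in auto)
  qed
  have tX: "tf_sff n g m p X X = C * (\<Sum>i<n. (X i)\<^sup>2 * qq i)" by (rule tfform) (use X in auto)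
  have tY: "tf_sff n g m p Y Y = C * (\<Sum>i<n. (Y i)\<^sup>2 * qq i)" by (rule tfform) (use Y in auto)
  have QX: "(\<Sum>i<n. (X i)\<^sup>2 * qq i) > 0" by (rule Qpos) (use X in auto)
  have QY: "(\<Sum>i<n. (Y i)\<^sup>2 * qq i) > 0" by (rule Qpos) (use Y in auto)
  define QX' where "QX' = (\<Sum>i<n. (X i)\<^sup>2 * qq i)"
  define QY' where "QY' = (\<Sum>i<n. (Y i)\<^sup>2 * qq i)"
  have sg: "(C * Q = 0 \<longleftrightarrow> C = 0) \<and> (C * Q > 0 \<longleftrightarrow> C > 0) \<and> (C * Q < 0 \<longleftrightarrow> C < 0)"
    if "Q > 0" for Q :: real
    using that by (simp add: zero_less_mult_iff mult_less_0_iff)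
  have "(tf_sff n g m p X X = 0 \<longleftrightarrow> tf_sff n g m p Y Y = 0)
      \<and> (tf_sff n g m p X X > 0 \<longleftrightarrow> tf_sff n g m p Y Y > 0)
      \<and> (tf_sff n g m p X X < 0 \<longleftrightarrow> tf_sff n g m p Y Y < 0)"
    unfolding tX tY QX'_def[symmetric] QY'_def[symmetric]
    using sg[of QX'] sg[of QY'] QX QY unfolding QX'_def QY'_def by blast
  then show ?thesis unfolding g_def n_def .
qed


end
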